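(* Fix $d\ge 11$, $\mu=0.75$, $\delta=0.1$, $\epsilon=0.01$. Let $w,w'\in\mathbb{R}^2$ with $\rho(w,w')=1$, and for $C>0$ let $W=B_2(w,\epsilon)\times B_{d-2}(0,C)$ and $W'=B_2(w',\epsilon)\times B_{d-2}(0,C)$. There exists $C'=C'(d)<\infty$ such that if $C\ge C'$, then for all $x\in W$ and all $r\in[\mu-\delta,\mu+\delta]$, the set $$S=W'\cap\big(B(x,r+\mu+\delta)\setminus B(x,r+\mu-\delta)\big)$$ satisfies $$\mathcal{L}S\ge\frac{\omega_2\,\omega_{d-2}\,\epsilon^2}{3}\Big(1.2^{\frac{d-2}{2}}-1\Big).$$
   Context: $\rho$ is Euclidean distance; $B_k(x,r)$ is the open Euclidean ball in $\mathbb{R}^k$, and $B(x,r)=B_d(x,r)$; $\mathcal{L}$ is Lebesgue measure on $\mathbb{R}^d$; $\omega_k=\mathcal{L}B_k(0,1)$ is the volume of the unit ball in $\mathbb{R}^k$. Points of $\mathbb{R}^d$ are identified with $\mathbb{R}^2\times\mathbb{R}^{d-2}$. *)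

theory Defs
  imports "HOL-Analysis.Analysis"
begin

definition unit_ball_volume :: "'a::euclidean_space itself \<Rightarrow> real" where
  "unit_ball_volume _ = measure lebesgue (ball (0::'a) 1)"

end

theory Submission
  imports Defs
begin

lemma ball_meas:
  fixes c :: "'a::euclidean_space"
  assumes "s \<ge> 0"
  shows "measure lebesgue (ball c s) = s ^ DIM('a) * unit_ball_volume TYPE('a)"
proof -
  have "measure lebesgue (ball c s) = measure lborel (ball c s)"
    by (simp add: measure_completion)
  also have "\<dots> = s ^ DIM('a) * measure lborel (ball (0::'a) 1)"
    using content_ball_conv_unit_ball[OF assms, of c] by simp
  also have "measure lborel (ball (0::'a) 1) = unit_ball_volume TYPE('a)"
    unfolding unit_ball_volume_def by (simp add: measure_completion)
  finally show ?thesis .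
qed

lemma times_meas:
  fixes A :: "'a::euclidean_space set" and B :: "'b::euclidean_space set"
  assumes "A \<in> sets borel" "B \<in> sets borel"
  shows "measure lebesgue (A \<times> B) = measure lebesgue A * measure lebesgue B"
proof -
  have AB: "A \<times> B \<in> sets borel"
    using assms by (simp add: borel_prod[symmetric])
  have "measure lebesgue (A \<times> B) = measure lborel (A \<times> B)"
    using AB by (simp add: measure_completion)
  also have "\<dots> = measure (lborel \<Otimes>\<^sub>M lborel) (A \<times> B)"
    by (simp add: lborel_prod)
  also have "\<dots> = measure lborel A * measure lborel B"
    unfolding measure_def using assms
    by (simp add: lborel.emeasure_pair_measure_Times enn2real_mult)
  also have "\<dots> = measure lebesgue A * measure lebesgue B"
    using assms by (simp add: measure_completion)
  finally show ?thesis .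
qed

lemma half_shell:
  fixes u :: "'a::euclidean_space"
  assumes "0 \<le> p" "p \<le> q"
  shows "measure lebesgue {w. p \<le> norm w \<and> norm w < q \<and> inner u w \<le> 0}
           \<ge> (q ^ DIM('a) - p ^ DIM('a)) * unit_ball_volume TYPE('a) / 2"
proof -
  define H where "H = {w. p \<le> norm w \<and> norm w < q \<and> inner u w \<le> 0}"
  define Sh where "Sh = ball (0::'a) q - ball 0 p"
  have Heq: "H = Sh \<inter> {w. inner u w \<le> 0}"
    unfolding H_def Sh_def by auto
  have Hb: "H \<in> sets lebesgue"
    unfolding Heq Sh_def
    by (intro sets.Int sets.Diff) (auto intro!: borel_closed closed_halfspace_le)
  have Hm: "H \<in> lmeasurable"
    by (rule bounded_set_imp_lmeasurable[OF _ Hb]) (auto simp: Heq Sh_def)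
  have img: "uminus ` H = (\<lambda>x. (-1) *\<^sub>R x + 0) ` H" by simp
  have mimg: "measure lebesgue (uminus ` H) = measure lebesgue H"
    unfolding img using measure_lebesgue_affine[of "-1" 0 H] by simp
  have Hm2: "uminus ` H \<in> lmeasurable"
  proof -
    have "uminus ` H = Sh \<inter> {w. inner (-u) w \<le> 0}"
    proof
      show "uminus ` H \<subseteq> Sh \<inter> {w. inner (-u) w \<le> 0}" by (auto simp: H_def Sh_def)
      show "Sh \<inter> {w. inner (-u) w \<le> 0} \<subseteq> uminus ` H"
      proof
        fix w assume "w \<in> Sh \<inter> {w. inner (-u) w \<le> 0}"
        then have "-w \<in> H" by (auto simp: H_def Sh_def)
        then show "w \<in> uminus ` H" by (metis image_eqI minus_minus)
      qed
    qed
    moreover have "Sh \<inter> {w. inner (-u) w \<le> 0} \<in> sets lebesgue"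
      unfolding Sh_def
      by (intro sets.Int sets.Diff) (auto intro!: borel_closed closed_halfspace_le)
    ultimately show ?thesis
      by (metis bounded_set_imp_lmeasurable bounded_Int bounded_ball bounded_diff Sh_def)
  qed
  have un: "Sh = H \<union> uminus ` H"
  proof
    show "Sh \<subseteq> H \<union> uminus ` H"
    proof
      fix w assume w: "w \<in> Sh"
      show "w \<in> H \<union> uminus ` H"
      proof (cases "inner u w \<le> 0")
        case True then show ?thesis using w by (auto simp: H_def Sh_def)
      next
        case False
        then have "-w \<in> H" using w by (auto simp: H_def Sh_def)
        then show ?thesis by (metis UnI2 image_eqI minus_minus)
      qed
    qed
    show "H \<union> uminus ` H \<subseteq> Sh" by (auto simp: H_def Sh_def)
  qed
  have "measure lebesgue Sh \<le> measure lebesgue H + measure lebesgue (uminus ` H)"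
    unfolding un using Hm Hm2 by (intro measure_subadditive) (auto simp: fmeasurable_def)
  moreover have "measure lebesgue Sh = measure lebesgue (ball (0::'a) q) - measure lebesgue (ball (0::'a) p)"
    unfolding Sh_def using assms
    by (intro measure_Diff) (use emeasure_lborel_ball_finite[of "0::'a" q] in auto)
  moreover have "measure lebesgue (ball (0::'a) q) = q ^ DIM('a) * unit_ball_volume TYPE('a)"
    using assms by (intro ball_meas) auto
  moreover have "measure lebesgue (ball (0::'a) p) = p ^ DIM('a) * unit_ball_volume TYPE('a)"
    using assms by (intro ball_meas) auto
  ultimately have "(q ^ DIM('a) - p ^ DIM('a)) * unit_ball_volume TYPE('a) \<le> 2 * measure lebesgue H"
    unfolding mimg by (simp add: algebra_simps)
  then show ?thesis unfolding H_def by simp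
qed

lemma pow_diff_bound:
  fixes p q s :: real
  assumes "0 \<le> p" "1 \<le> s" "s \<le> q" "s * p \<le> q"
  shows "q ^ n - p ^ n \<ge> s ^ n - 1"
proof (cases "p \<le> 1")
  case True
  have "s ^ n \<le> q ^ n" using assms by (intro power_mono) auto
  moreover have "p ^ n \<le> 1" using True assms by (intro power_le_one) auto
  ultimately show ?thesis by linarith
next
  case False
  have "(s * p) ^ n \<le> q ^ n" using assms by (intro power_mono) auto
  then have "s ^ n * p ^ n \<le> q ^ n" by (simp add: power_mult_distrib)
  moreover have "1 \<le> p ^ n" using False by (intro one_le_power) auto
  moreover have "1 \<le> s ^ n" using assms by (intro one_le_power) auto
  moreover have "(s ^ n - 1) * 1 \<le> (s ^ n - 1) * p ^ n"
    using calculation by (intro mult_left_mono) auto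
  ultimately show ?thesis by (simp add: algebra_simps)
qed

lemma powr_sqrt: "(1.2::real) powr (real n / 2) = sqrt 1.2 ^ n"
proof -
  have "sqrt (1.2::real) ^ n = sqrt 1.2 powr real n"
    by (subst powr_realpow) auto
  also have "\<dots> = ((1.2::real) powr (1/2)) powr real n"
    by (simp add: powr_half_sqrt)
  also have "\<dots> = 1.2 powr (real n / 2)"
    by (simp add: powr_powr)
  finally show ?thesis by simp
qed

lemma poly1l: fixes t :: real assumes "0 \<le> t" "t \<le> 0.2"
  shows "(0.86 + 1.53 * t - 0.002)^2 \<ge> (t + 0.65 + 0.65)^2 - 0.9604"
proof -
  have "t*t \<ge> 0" using assms by auto
  moreover have "(0.86 + 1.53 * t - 0.002)^2 = 0.736164 + 2.62548*t + 2.3409*(t*t)"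
    by (simp add: power2_eq_square algebra_simps)
  moreover have "(t + 0.65 + 0.65)^2 - 0.9604 = 0.7296 + 2.6*t + t*t"
    by (simp add: power2_eq_square algebra_simps)
  ultimately show ?thesis using assms by (simp only:) (simp, use mult_nonneg_nonneg[of t t] in linarith)
qed
lemma poly2l: fixes t :: real assumes "0 \<le> t" "t \<le> 0.2"
  shows "(1.0977 + 1.3 * t + 0.002)^2 \<le> (t + 0.65 + 0.85)^2 - 1.0404"
proof -
  have "t*t \<le> 0.2 * t" using mult_right_mono[OF assms(2) assms(1)] by simp
  moreover have "(1.0977 + 1.3 * t + 0.002)^2 = 1.20934009 + 2.85922*t + 1.69*(t*t)"
    by (simp add: power2_eq_square algebra_simps)
  moreover have "(t + 0.65 + 0.85)^2 - 1.0404 = 1.2096 + 3*t + t*t"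
    by (simp add: power2_eq_square algebra_simps)
  ultimately show ?thesis using assms by (simp only:) (simp, linarith?)
qed
lemma a2l: fixes a :: real assumes "a > 0.98" "a < 1.02" shows "a^2 > 0.9604 \<and> a^2 < 1.0404"
proof -
  have "a^2 > 0.98^2" using assms by (intro power_strict_mono) auto
  moreover have "a^2 < 1.02^2" using assms by (intro power_strict_mono) auto
  moreover have "(0.98::real)^2 = 0.9604" "(1.02::real)^2 = 1.0404" by (simp_all add: power2_eq_square)
  ultimately show ?thesis by linarith
qed

lemma a1l: fixes w w' x1 y1 :: "real^2"
  assumes ww: "dist w w' = 1" and x1: "dist w x1 < 0.01" and y1: "dist w' y1 < 0.01"
  shows "dist x1 y1 > 0.98 \<and> dist x1 y1 < 1.02"
proof -
  have "dist w w' \<le> dist w x1 + dist x1 w'" "dist x1 w' \<le> dist x1 y1 + dist y1 w'"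
    "dist x1 y1 \<le> dist x1 w + dist w y1" "dist w y1 \<le> dist w w' + dist w' y1"
    by (rule dist_triangle)+
  moreover have "dist y1 w' = dist w' y1" "dist x1 w = dist w x1" by (simp_all add: dist_commute)
  ultimately show ?thesis using ww x1 y1 by (simp add: power2_eq_square)
qed

theorem mainTheorem7:
  fixes TYPE_Rdm2 :: "'a::euclidean_space itself"
  assumes "DIM('a) + 2 \<ge> 11"
  shows "\<exists>C'::real. \<forall>C::real. \<forall>w w' :: real^2. \<forall>(x :: (real^2) \<times> 'a). \<forall>r::real.
     (C > 0 \<and> C \<ge> C' \<and> dist w w' = 1
      \<and> x \<in> ball w 0.01 \<times> ball (0::'a) C
      \<and> r \<in> {0.75 - 0.1 .. 0.75 + 0.1}) \<longrightarrow>
     measure lebesgue ((ball w' 0.01 \<times> ball (0::'a) C) \<inter>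
                       (ball x (r + 0.75 + 0.1) - ball x (r + 0.75 - 0.1)))
       \<ge> unit_ball_volume TYPE(real^2) * unit_ball_volume TYPE('a) * 0.01^2 / 3
          * (1.2 powr (real DIM('a) / 2) - 1)"
proof (intro exI[of _ 1010] allI impI)
  fix C :: real and w w' :: "real^2" and x :: "(real^2) \<times> 'a" and r :: real
  assume H0: "C > 0 \<and> C \<ge> 1010 \<and> dist w w' = 1
      \<and> x \<in> ball w 0.01 \<times> ball (0::'a) C
      \<and> r \<in> {0.75 - 0.1 .. 0.75 + 0.1}"
  obtain x1 x2 where xe: "x = (x1, x2)" by (cases x)
  have C: "C \<ge> 1010" and ww: "dist w w' = 1" and x1: "dist w x1 < 0.01"
    and x2: "norm x2 < C" and r1: "0.65 \<le> r" and r2: "r \<le> 0.85"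
    using H0 by (auto simp: xe)
  define n where "n = DIM('a)"
  define h :: real where "h = 0.002"
  define t where "t = r - 0.65"
  define p where "p = 0.86 + 1.53 * t"
  define q where "q = 1.0977 + 1.3 * t"
  define u where "u = sgn x2"
  define c where "c = x2 - h *\<^sub>R u"
  define Hs where "Hs = {v::'a. p \<le> norm v \<and> norm v < q \<and> inner u v \<le> 0}"
  define T where "T = {y. p \<le> norm (y - c) \<and> norm (y - c) < q \<and> inner u (y - c) \<le> 0}"
  define S where "S = (ball w' 0.01 \<times> ball (0::'a) C) \<inter>
                       (ball x (r + 0.75 + 0.1) - ball x (r + 0.75 - 0.1))"
  have t0: "0 \<le> t" "t \<le> 0.2" using r1 r2 by (auto simp: t_def)
  have nu: "norm u \<le> 1" by (simp add: u_def norm_sgn)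
  have TH: "T = (+) c ` Hs"
  proof
    show "T \<subseteq> (+) c ` Hs"
    proof
      fix y assume "y \<in> T"
      then have "y - c \<in> Hs" by (auto simp: T_def Hs_def)
      then show "y \<in> (+) c ` Hs" by (rule rev_image_eqI) simp
    qed
    show "(+) c ` Hs \<subseteq> T" by (auto simp: T_def Hs_def)
  qed
  have Tb: "T \<in> sets borel" unfolding T_def by measurable
  have mT: "measure lebesgue T = measure lebesgue Hs"
    unfolding TH by (rule measure_translation)
  have sub: "ball w' 0.01 \<times> T \<subseteq> S"
  proof
    fix y assume "y \<in> ball w' 0.01 \<times> T"
    then obtain y1 y2 where ye: "y = (y1, y2)" and y1: "dist w' y1 < 0.01" and y2: "y2 \<in> T"
      by (cases y) auto
    define v where "v = y2 - c"
    define d where "d = y2 - x2"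
    have dv: "d = v - h *\<^sub>R u" by (simp add: d_def v_def c_def)
    have v1: "p \<le> norm v" "norm v < q" "inner u v \<le> 0" using y2 by (auto simp: T_def v_def)
    have hu: "norm (h *\<^sub>R u) \<le> h" using nu by (simp add: h_def)
    have d1: "norm d \<ge> p - h" using v1 hu norm_triangle_ineq2[of v "h *\<^sub>R u"] unfolding dv
      by linarith
    have d2: "norm d < q + h" using v1 hu norm_triangle_ineq4[of v "h *\<^sub>R u"] unfolding dv by linarith
    have a1: "dist x1 y1 > 0.98 \<and> dist x1 y1 < 1.02" using a1l[OF ww x1 y1] .
    have a2: "(dist x1 y1)^2 > 0.9604 \<and> (dist x1 y1)^2 < 1.0404"
      using a2l a1 by blast
    have pd: "p - h \<ge> 0" using t0 by (simp add: p_def h_def)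
    have b1: "(norm d)^2 \<ge> (p - h)^2" using d1 pd by (intro power_mono) auto
    have b2: "(norm d)^2 < (q + h)^2" using d2 by (intro power_strict_mono) auto
    have rt: "r = t + 0.65" by (simp add: t_def)
    have poly1: "(p - h)^2 \<ge> (r + 0.65)^2 - 0.9604"
      using poly1l[OF t0] unfolding p_def h_def rt .
    have poly2: "(q + h)^2 \<le> (r + 0.85)^2 - 1.0404"
      using poly2l[OF t0] unfolding q_def h_def rt .
    have dxy0: "dist x y = sqrt ((dist x1 y1)^2 + (dist x2 y2)^2)"
      unfolding xe ye by (rule dist_Pair_Pair)
    have "dist x2 y2 = norm d" by (simp add: d_def dist_norm norm_minus_commute)
    then have dxy: "dist x y = sqrt ((dist x1 y1)^2 + (norm d)^2)" using dxy0 by simp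
    have lo: "r + 0.65 \<le> dist x y"
      unfolding dxy using a2 b1 poly1 by (intro real_le_rsqrt) linarith
    have "(dist x1 y1)^2 + (norm d)^2 < (r + 0.85)^2" using a2 b2 poly2 by linarith
    then have "sqrt ((dist x1 y1)^2 + (norm d)^2) < sqrt ((r + 0.85)^2)"
      by (rule real_sqrt_less_mono)
    then have hi: "dist x y < r + 0.85" unfolding dxy using r1 by simp
    have ny: "norm y2 < C"
    proof (cases "norm x2 < C - 2")
      case True
      have "q + h < 2" using t0 by (simp add: q_def h_def)
      then have "norm y2 \<le> norm x2 + norm d" using norm_triangle_ineq[of x2 d] by (simp add: d_def)
      then show ?thesis using True d2 \<open>q + h < 2\<close> by linarith
    next
      case False
      then have big: "norm x2 \<ge> 1008" using C by linarith
      then have "x2 \<noteq> 0" by auto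
      have xu: "x2 = norm x2 *\<^sub>R u" using \<open>x2 \<noteq> 0\<close> by (simp add: u_def sgn_div_norm)
      have "norm u = 1" using \<open>x2 \<noteq> 0\<close> by (simp add: u_def norm_sgn)
      then have uu: "inner u u = 1" by (simp add: dot_square_norm)
      have "inner x2 d = norm x2 * (inner u v - h * inner u u)"
        by (subst xu) (simp add: dv inner_diff_right algebra_simps)
      also have "\<dots> \<le> - h * norm x2" using uu mult_nonneg_nonpos[OF norm_ge_zero[of x2] v1(3)] by (simp add: algebra_simps)
      finally have ixd: "inner x2 d \<le> - h * norm x2" .
      have "(norm y2)^2 = inner (x2 + d) (x2 + d)" by (simp add: d_def dot_square_norm)
      also have "\<dots> = (norm x2)^2 + 2 * inner x2 d + (norm d)^2"
        by (simp add: power2_norm_eq_inner inner_add_left inner_add_right inner_commute[of d x2])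
      also have "\<dots> < (norm x2)^2"
      proof -
        have "q + h < 2" using t0 by (simp add: q_def h_def)
        then have "norm d < 2" using d2 by linarith
        then have "(norm d)^2 < 2^2" by (intro power_strict_mono) auto
        then have "(norm d)^2 < 4" by simp
        moreover have "2 * h * norm x2 \<ge> 4" using big by (simp add: h_def)
        ultimately show ?thesis using ixd by linarith
      qed
      finally have "norm y2 < norm x2"
        using power2_less_imp_less norm_ge_zero by blast
      then show ?thesis using x2 by linarith
    qed
    show "y \<in> S"
      unfolding S_def using y1 ny lo hi by (auto simp: ye dist_commute)
  qed
  have Sb: "S \<in> sets lebesgue"
    unfolding S_def
    by (intro sets.Int sets.Diff) (auto intro!: borel_open open_Times lborelD)
  have Sbd: "bounded S" unfolding S_def
    by (rule bounded_subset[of "ball x (r + 0.75 + 0.1)"]) auto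
  have Sm: "S \<in> fmeasurable lebesgue"
    using bounded_set_imp_lmeasurable[OF Sbd Sb] .
  have BT: "ball w' 0.01 \<times> T \<in> sets borel" using Tb by (simp add: borel_prod[symmetric])
  have m1: "measure lebesgue (ball w' 0.01 \<times> T) \<le> measure lebesgue S"
    by (rule measure_mono_fmeasurable[OF sub _ Sm]) (use BT in simp)
  have m2: "measure lebesgue (ball w' 0.01 \<times> T) = measure lebesgue (ball w' (0.01::real)) * measure lebesgue T"
    by (rule times_meas) (use Tb in auto)
  have m3: "measure lebesgue (ball w' (0.01::real)) = 0.01^2 * unit_ball_volume TYPE(real^2)"
    using ball_meas[of "0.01" w'] by simp
  have pq: "0 \<le> p" "p \<le> q" using t0 by (simp_all add: p_def q_def)
  have m4: "measure lebesgue Hs \<ge> (q ^ n - p ^ n) * unit_ball_volume TYPE('a) / 2"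
    unfolding Hs_def n_def by (rule half_shell[OF pq])
  define s where "s = sqrt (1.2::real)"
  have s1: "1 \<le> s" unfolding s_def by (rule real_le_rsqrt) simp
  have s2: "s \<le> 1.0955" unfolding s_def by (rule real_le_lsqrt) (simp_all add: power2_eq_square)
  have sq: "s \<le> q" using s2 t0 by (simp add: q_def)
  have spq: "s * p \<le> q"
  proof -
    have "s * p \<le> 1.0955 * p" using s2 pq by (intro mult_right_mono) auto
    also have "\<dots> \<le> q" using t0 by (simp add: p_def q_def)
    finally show ?thesis .
  qed
  have m5: "q ^ n - p ^ n \<ge> s ^ n - 1" by (rule pow_diff_bound[OF pq(1) s1 sq spq])
  have sn: "s ^ n \<ge> 1" using s1 by (intro one_le_power)
  have om: "unit_ball_volume TYPE('a) \<ge> 0" "unit_ball_volume TYPE(real^2) \<ge> 0"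
    by (simp_all add: unit_ball_volume_def)
  have m6: "measure lebesgue T \<ge> (s ^ n - 1) * unit_ball_volume TYPE('a) / 2"
    using m4 m5 om mult_right_mono[OF m5 om(1)] unfolding mT by linarith
  have pw: "1.2 powr (real DIM('a) / 2) = s ^ n" unfolding s_def n_def by (rule powr_sqrt)
  define X where "X = unit_ball_volume TYPE(real^2) * unit_ball_volume TYPE('a) * 0.01^2 * (s ^ n - 1)"
  have X0: "X \<ge> 0" unfolding X_def using om sn by simp
  have "X / 2 \<le> 0.01^2 * unit_ball_volume TYPE(real^2) * measure lebesgue T"
  proof -
    have "0.01^2 * unit_ball_volume TYPE(real^2) * ((s ^ n - 1) * unit_ball_volume TYPE('a) / 2)
      \<le> 0.01^2 * unit_ball_volume TYPE(real^2) * measure lebesgue T"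
      using m6 om by (intro mult_left_mono) auto
    then show ?thesis unfolding X_def by (simp add: algebra_simps)
  qed
  then have "X / 3 \<le> measure lebesgue S" using X0 m1 m2 m3 by simp
  then have final: "unit_ball_volume TYPE(real^2) * unit_ball_volume TYPE('a) * 0.01^2 / 3
          * (1.2 powr (real DIM('a) / 2) - 1) \<le> measure lebesgue S"
    unfolding pw X_def by simp
  show "unit_ball_volume TYPE(real^2) * unit_ball_volume TYPE('a) * 0.01^2 / 3
          * (1.2 powr (real DIM('a) / 2) - 1) \<le> measure lebesgue ((ball w' 0.01 \<times> ball (0::'a) C) \<inter>
                       (ball x (r + 0.75 + 0.1) - ball x (r + 0.75 - 0.1)))"
    using final unfolding S_def .
qed

end
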